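(* Let $\mathcal{C}$ be a finitely complete category. Then $\mathcal{C}$ is a regular category if and only if the following three conditions hold: (1) every arrow in $\mathcal{C}$ factors as a regular epimorphism followed by a monomorphism; (2) for every regular epimorphism $f\colon A\to B$ and every object $E$, the induced arrow $1_E\times f\colon E\times A\to E\times B$ is a regular epimorphism; (3) regular epimorphisms are stable under pullbacks along split monomorphisms.
   Context: A morphism is a regular epimorphism if it is the coequalizer of some pair of morphisms. A finitely complete category is regular if every arrow factors as a regular epimorphism followed by a monomorphism and these factorizations are stable under pullback. *)

theory Defs
  imports Main
begin

text \<open>A (two-sorted) category: objects, arrows, domain, codomain, identities,
  and composition; Comp C g f means g after f.\<close>

record ('o, 'a) category =
  Obj  :: "'o set"
  Arr  :: "'a set"
  Dom  :: "'a \<Rightarrow> 'o"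
  Cod  :: "'a \<Rightarrow> 'o"
  Id   :: "'o \<Rightarrow> 'a"
  Comp :: "'a \<Rightarrow> 'a \<Rightarrow> 'a"

definition hom :: "('o, 'a) category \<Rightarrow> 'o \<Rightarrow> 'o \<Rightarrow> 'a set" where
  "hom C x y = {f \<in> Arr C. Dom C f = x \<and> Cod C f = y}"

definition is_category :: "('o, 'a) category \<Rightarrow> bool" where
  "is_category C \<longleftrightarrow>
     (\<forall>f \<in> Arr C. Dom C f \<in> Obj C \<and> Cod C f \<in> Obj C) \<and>
     (\<forall>x \<in> Obj C. Id C x \<in> hom C x x) \<and>
     (\<forall>f \<in> Arr C. \<forall>g \<in> Arr C. Cod C f = Dom C g \<longrightarrow>
         Comp C g f \<in> hom C (Dom C f) (Cod C g)) \<and>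
     (\<forall>f \<in> Arr C. \<forall>g \<in> Arr C. \<forall>h \<in> Arr C.
         Cod C f = Dom C g \<longrightarrow> Cod C g = Dom C h \<longrightarrow>
         Comp C h (Comp C g f) = Comp C (Comp C h g) f) \<and>
     (\<forall>f \<in> Arr C. Comp C f (Id C (Dom C f)) = f \<and> Comp C (Id C (Cod C f)) f = f)"

definition mono :: "('o, 'a) category \<Rightarrow> 'a \<Rightarrow> bool" where
  "mono C m \<longleftrightarrow> m \<in> Arr C \<and>
     (\<forall>f \<in> Arr C. \<forall>g \<in> Arr C. Dom C f = Dom C g \<longrightarrow> Cod C f = Dom C m \<longrightarrow>
        Cod C g = Dom C m \<longrightarrow> Comp C m f = Comp C m g \<longrightarrow> f = g)"

definition split_mono :: "('o, 'a) category \<Rightarrow> 'a \<Rightarrow> bool" where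
  "split_mono C s \<longleftrightarrow> s \<in> Arr C \<and>
     (\<exists>r. r \<in> hom C (Cod C s) (Dom C s) \<and> Comp C r s = Id C (Dom C s))"

definition is_coequalizer :: "('o, 'a) category \<Rightarrow> 'a \<Rightarrow> 'a \<Rightarrow> 'a \<Rightarrow> bool" where
  "is_coequalizer C f g e \<longleftrightarrow>
     f \<in> Arr C \<and> g \<in> Arr C \<and> e \<in> Arr C \<and>
     Dom C f = Dom C g \<and> Cod C f = Cod C g \<and> Dom C e = Cod C f \<and>
     Comp C e f = Comp C e g \<and>
     (\<forall>h \<in> Arr C. Dom C h = Cod C f \<longrightarrow> Comp C h f = Comp C h g \<longrightarrow>
        (\<exists>!u. u \<in> hom C (Cod C e) (Cod C h) \<and> Comp C u e = h))"

definition regular_epi :: "('o, 'a) category \<Rightarrow> 'a \<Rightarrow> bool" where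
  "regular_epi C e \<longleftrightarrow> (\<exists>f g. is_coequalizer C f g e)"

definition is_terminal :: "('o, 'a) category \<Rightarrow> 'o \<Rightarrow> bool" where
  "is_terminal C t \<longleftrightarrow> t \<in> Obj C \<and> (\<forall>x \<in> Obj C. \<exists>!u. u \<in> hom C x t)"

text \<open>Pullback square: Comp f p = Comp g q, with p into Dom f and q into Dom g.
  Thus q is the pullback of f along g and p is the pullback of g along f.\<close>
definition is_pullback :: "('o, 'a) category \<Rightarrow> 'a \<Rightarrow> 'a \<Rightarrow> 'a \<Rightarrow> 'a \<Rightarrow> bool" where
  "is_pullback C f g p q \<longleftrightarrow>
     f \<in> Arr C \<and> g \<in> Arr C \<and> Cod C f = Cod C g \<and>
     p \<in> hom C (Dom C p) (Dom C f) \<and> q \<in> hom C (Dom C p) (Dom C g) \<and>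
     Comp C f p = Comp C g q \<and>
     (\<forall>a \<in> Arr C. \<forall>b \<in> Arr C.
        Dom C a = Dom C b \<longrightarrow> Cod C a = Dom C f \<longrightarrow> Cod C b = Dom C g \<longrightarrow>
        Comp C f a = Comp C g b \<longrightarrow>
        (\<exists>!u. u \<in> hom C (Dom C a) (Dom C p) \<and> Comp C p u = a \<and> Comp C q u = b))"

definition is_product :: "('o, 'a) category \<Rightarrow> 'o \<Rightarrow> 'o \<Rightarrow> 'o \<Rightarrow> 'a \<Rightarrow> 'a \<Rightarrow> bool" where
  "is_product C x y P p1 p2 \<longleftrightarrow>
     p1 \<in> hom C P x \<and> p2 \<in> hom C P y \<and>
     (\<forall>a \<in> Arr C. \<forall>b \<in> Arr C. Dom C a = Dom C b \<longrightarrow> Cod C a = x \<longrightarrow> Cod C b = y \<longrightarrow>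
        (\<exists>!u. u \<in> hom C (Dom C a) P \<and> Comp C p1 u = a \<and> Comp C p2 u = b))"

text \<open>Finitely complete: a terminal object and all pullbacks (standard equivalent
  of having all finite limits).\<close>
definition finitely_complete :: "('o, 'a) category \<Rightarrow> bool" where
  "finitely_complete C \<longleftrightarrow>
     (\<exists>t. is_terminal C t) \<and>
     (\<forall>f \<in> Arr C. \<forall>g \<in> Arr C. Cod C f = Cod C g \<longrightarrow> (\<exists>p q. is_pullback C f g p q))"

definition regepi_mono_factorizations :: "('o, 'a) category \<Rightarrow> bool" where
  "regepi_mono_factorizations C \<longleftrightarrow>
     (\<forall>f \<in> Arr C. \<exists>e m. regular_epi C e \<and> mono C m \<and> Cod C e = Dom C m \<and> Comp C m e = f)"

text \<open>Stability of (regular epi, mono) factorizations under pullback: pulling back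
  f = m e along g (first m along g, then e along the resulting projection) yields again
  a regular epi followed by a mono.\<close>
definition factorizations_pullback_stable :: "('o, 'a) category \<Rightarrow> bool" where
  "factorizations_pullback_stable C \<longleftrightarrow>
     (\<forall>e m g g' m' g'' e'.
        regular_epi C e \<longrightarrow> mono C m \<longrightarrow> Cod C e = Dom C m \<longrightarrow>
        g \<in> Arr C \<longrightarrow> Cod C g = Cod C m \<longrightarrow>
        is_pullback C m g g' m' \<longrightarrow> is_pullback C e g' g'' e' \<longrightarrow>
        regular_epi C e' \<and> mono C m')"

definition regular_category :: "('o, 'a) category \<Rightarrow> bool" where
  "regular_category C \<longleftrightarrow> is_category C \<and> finitely_complete C \<and>
     regepi_mono_factorizations C \<and> factorizations_pullback_stable C"

end

theory Submission
  imports Defs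
begin

locale cat =
  fixes C :: "('o, 'a) category"
  assumes is_cat: "is_category C"
begin

abbreviation comp (infixr "\<cdot>" 55) where "g \<cdot> f \<equiv> Comp C g f"

lemma dom_obj[simp]: "f \<in> Arr C \<Longrightarrow> Dom C f \<in> Obj C"
  using is_cat unfolding is_category_def by blast
lemma cod_obj[simp]: "f \<in> Arr C \<Longrightarrow> Cod C f \<in> Obj C"
  using is_cat unfolding is_category_def by blast
lemma id_arr[simp]: "x \<in> Obj C \<Longrightarrow> Id C x \<in> Arr C"
  using is_cat unfolding is_category_def hom_def by blast
lemma dom_id[simp]: "x \<in> Obj C \<Longrightarrow> Dom C (Id C x) = x"
  using is_cat unfolding is_category_def hom_def by blast
lemma cod_id[simp]: "x \<in> Obj C \<Longrightarrow> Cod C (Id C x) = x"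
  using is_cat unfolding is_category_def hom_def by blast
lemma comp_arr[simp]: "f \<in> Arr C \<Longrightarrow> g \<in> Arr C \<Longrightarrow> Cod C f = Dom C g \<Longrightarrow> g \<cdot> f \<in> Arr C"
  using is_cat unfolding is_category_def hom_def by blast
lemma dom_comp[simp]: "f \<in> Arr C \<Longrightarrow> g \<in> Arr C \<Longrightarrow> Cod C f = Dom C g \<Longrightarrow> Dom C (g \<cdot> f) = Dom C f"
  using is_cat unfolding is_category_def hom_def by blast
lemma cod_comp[simp]: "f \<in> Arr C \<Longrightarrow> g \<in> Arr C \<Longrightarrow> Cod C f = Dom C g \<Longrightarrow> Cod C (g \<cdot> f) = Cod C g"
  using is_cat unfolding is_category_def hom_def by blast
lemma assoc[simp]: "f \<in> Arr C \<Longrightarrow> g \<in> Arr C \<Longrightarrow> h \<in> Arr C \<Longrightarrow> Cod C f = Dom C g \<Longrightarrow>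
   Cod C g = Dom C h \<Longrightarrow> (h \<cdot> g) \<cdot> f = h \<cdot> (g \<cdot> f)"
  using is_cat unfolding is_category_def by metis
lemma id_l[simp]: "f \<in> Arr C \<Longrightarrow> Cod C f = y \<Longrightarrow> Id C y \<cdot> f = f"
  using is_cat unfolding is_category_def by blast
lemma id_r[simp]: "f \<in> Arr C \<Longrightarrow> Dom C f = y \<Longrightarrow> f \<cdot> Id C y = f"
  using is_cat unfolding is_category_def by blast

lemma pbD:
  assumes "is_pullback C f g p q"
  shows "f \<in> Arr C" "g \<in> Arr C" "Cod C f = Cod C g" "p \<in> Arr C" "q \<in> Arr C"
    "Dom C q = Dom C p" "Cod C p = Dom C f" "Cod C q = Dom C g" "f \<cdot> p = g \<cdot> q"
  using assms unfolding is_pullback_def hom_def by auto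

lemma pb_ex:
  assumes "is_pullback C f g p q" "a \<in> Arr C" "b \<in> Arr C" "Dom C a = Dom C b"
    "Cod C a = Dom C f" "Cod C b = Dom C g" "f \<cdot> a = g \<cdot> b"
  shows "\<exists>u. u \<in> Arr C \<and> Dom C u = Dom C a \<and> Cod C u = Dom C p \<and> p \<cdot> u = a \<and> q \<cdot> u = b"
proof -
  have "\<exists>!u. u \<in> hom C (Dom C a) (Dom C p) \<and> p \<cdot> u = a \<and> q \<cdot> u = b"
    using assms unfolding is_pullback_def by blast
  then show ?thesis unfolding hom_def by blast
qed

lemma ex1_eq: "\<exists>!x. P x \<Longrightarrow> P a \<Longrightarrow> P b \<Longrightarrow> a = b"
  by blast

lemma pb_univ:
  assumes "is_pullback C f g p q" "a \<in> Arr C" "b \<in> Arr C" "Dom C a = Dom C b"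
    "Cod C a = Dom C f" "Cod C b = Dom C g" "Comp C f a = Comp C g b"
  shows "\<exists>!u. u \<in> hom C (Dom C a) (Dom C p) \<and> p \<cdot> u = a \<and> q \<cdot> u = b"
  using assms unfolding is_pullback_def by blast

lemma pb_uniq:
  assumes pb: "is_pullback C f g p q" and "u \<in> Arr C" "v \<in> Arr C" "Dom C u = Dom C v"
    "Cod C u = Dom C p" "Cod C v = Dom C p" "p \<cdot> u = p \<cdot> v" "q \<cdot> u = q \<cdot> v"
  shows "u = v"
proof -
  note P = pbD[OF pb]
  have sq: "f \<cdot> (p \<cdot> u) = g \<cdot> (q \<cdot> u)"
  proof -
    have "f \<cdot> (p \<cdot> u) = (f \<cdot> p) \<cdot> u" using P(1,4,7) assms(2,5) by simp
    also have "\<dots> = (g \<cdot> q) \<cdot> u" using P(9) by simp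
    also have "\<dots> = g \<cdot> (q \<cdot> u)" using P(2,5,6,8) assms(2,5) by simp
    finally show ?thesis .
  qed
  have E: "\<exists>!w. w \<in> hom C (Dom C (p \<cdot> u)) (Dom C p) \<and> p \<cdot> w = p \<cdot> u \<and> q \<cdot> w = q \<cdot> u"
    by (rule pb_univ[OF pb]) (use assms P sq in simp_all)
  have d: "Dom C (p \<cdot> u) = Dom C u" using P(4) assms(2,5) by simp
  have h1: "u \<in> hom C (Dom C (p \<cdot> u)) (Dom C p)"
    unfolding hom_def d using assms(2,5) by simp
  have h2: "v \<in> hom C (Dom C (p \<cdot> u)) (Dom C p)"
    unfolding hom_def d using assms(3,4,6) by simp
  show ?thesis
    by (rule ex1_eq[OF E]) (use h1 h2 assms(7,8) in simp_all)
qed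

lemma prodD:
  assumes "is_product C x y P p1 p2"
  shows "p1 \<in> Arr C" "Dom C p1 = P" "Cod C p1 = x" "p2 \<in> Arr C" "Dom C p2 = P" "Cod C p2 = y"
  using assms unfolding is_product_def hom_def by auto

lemma prod_ex:
  assumes "is_product C x y P p1 p2" "a \<in> Arr C" "b \<in> Arr C" "Dom C a = Dom C b"
    "Cod C a = x" "Cod C b = y"
  shows "\<exists>u. u \<in> Arr C \<and> Dom C u = Dom C a \<and> Cod C u = P \<and> p1 \<cdot> u = a \<and> p2 \<cdot> u = b"
proof -
  have "\<exists>!u. u \<in> hom C (Dom C a) P \<and> p1 \<cdot> u = a \<and> p2 \<cdot> u = b"
    using assms unfolding is_product_def by blast
  then show ?thesis unfolding hom_def by blast
qed

lemma prod_univ: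
  assumes "is_product C x y P p1 p2" "a \<in> Arr C" "b \<in> Arr C" "Dom C a = Dom C b"
    "Cod C a = x" "Cod C b = y"
  shows "\<exists>!u. u \<in> hom C (Dom C a) P \<and> p1 \<cdot> u = a \<and> p2 \<cdot> u = b"
  using assms unfolding is_product_def by blast

lemma prod_uniq:
  assumes pr: "is_product C x y P p1 p2" and "u \<in> Arr C" "v \<in> Arr C" "Dom C u = Dom C v"
    "Cod C u = P" "Cod C v = P" "p1 \<cdot> u = p1 \<cdot> v" "p2 \<cdot> u = p2 \<cdot> v"
  shows "u = v"
proof -
  note P = prodD[OF pr]
  have E: "\<exists>!w. w \<in> hom C (Dom C (p1 \<cdot> u)) P \<and> p1 \<cdot> w = p1 \<cdot> u \<and> p2 \<cdot> w = p2 \<cdot> u"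
    by (rule prod_univ[OF pr]) (use assms P in simp_all)
  have d: "Dom C (p1 \<cdot> u) = Dom C u" using P(1,2) assms(2,5) by simp
  have h1: "u \<in> hom C (Dom C (p1 \<cdot> u)) P"
    unfolding hom_def d using assms(2,5) by simp
  have h2: "v \<in> hom C (Dom C (p1 \<cdot> u)) P"
    unfolding hom_def d using assms(3,4,6) by simp
  show ?thesis
    by (rule ex1_eq[OF E]) (use h1 h2 assms(7,8) in simp_all)
qed

lemma regepi_arr: "regular_epi C e \<Longrightarrow> e \<in> Arr C"
  unfolding regular_epi_def is_coequalizer_def by blast

lemma coeq_univ:
  assumes co: "is_coequalizer C a b e" and "h \<in> Arr C" "Dom C h = Cod C a" "h \<cdot> a = h \<cdot> b"
  shows "\<exists>!u. u \<in> hom C (Cod C e) (Cod C h) \<and> u \<cdot> e = h"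
  using co assms unfolding is_coequalizer_def by blast

lemma regepi_epi:
  assumes r: "regular_epi C e" and "w1 \<in> Arr C" "w2 \<in> Arr C" "Dom C w1 = Cod C e"
    "Dom C w2 = Cod C e" "Cod C w1 = Cod C w2" "w1 \<cdot> e = w2 \<cdot> e"
  shows "w1 = w2"
proof -
  from r obtain a b where co: "is_coequalizer C a b e" unfolding regular_epi_def by blast
  have K: "a \<in> Arr C" "b \<in> Arr C" "e \<in> Arr C" "Dom C a = Dom C b" "Cod C a = Cod C b"
    "Dom C e = Cod C a" "e \<cdot> a = e \<cdot> b"
    using co unfolding is_coequalizer_def by auto
  have h: "(w1 \<cdot> e) \<cdot> a = (w1 \<cdot> e) \<cdot> b" using K assms by simp
  have E: "\<exists>!u. u \<in> hom C (Cod C e) (Cod C (w1 \<cdot> e)) \<and> u \<cdot> e = w1 \<cdot> e"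
    by (rule coeq_univ[OF co]) (use K assms h in simp_all)
  have d: "Cod C (w1 \<cdot> e) = Cod C w1" using K(3) assms(2,4) by simp
  have h1: "w1 \<in> hom C (Cod C e) (Cod C (w1 \<cdot> e))"
    unfolding hom_def d using assms(2,4) by simp
  have h2: "w2 \<in> hom C (Cod C e) (Cod C (w1 \<cdot> e))"
    unfolding hom_def d using assms(3,5,6) by simp
  show ?thesis
    by (rule ex1_eq[OF E]) (use h1 h2 assms(7) in simp_all)
qed

lemma coeq_ex:
  assumes co: "is_coequalizer C a b e" and "h \<in> Arr C" "Dom C h = Cod C a" "h \<cdot> a = h \<cdot> b"
  shows "\<exists>w. w \<in> Arr C \<and> Dom C w = Cod C e \<and> Cod C w = Cod C h \<and> w \<cdot> e = h"
proof -
  have "\<exists>!u. u \<in> hom C (Cod C e) (Cod C h) \<and> u \<cdot> e = h"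
    using co assms unfolding is_coequalizer_def by blast
  then show ?thesis unfolding hom_def by blast
qed

lemma pb_regepi_transfer:
  assumes pb: "is_pullback C f g p q" and pb0: "is_pullback C f g p0 q0"
    and r: "regular_epi C q0"
  shows "regular_epi C q"
proof -
  from r obtain a b where co: "is_coequalizer C a b q0" unfolding regular_epi_def by blast
  have K: "a \<in> Arr C" "b \<in> Arr C" "q0 \<in> Arr C" "Dom C a = Dom C b" "Cod C a = Cod C b"
    "Dom C q0 = Cod C a" "q0 \<cdot> a = q0 \<cdot> b"
    using co unfolding is_coequalizer_def by auto
  note P = pbD[OF pb] and P0 = pbD[OF pb0]
  obtain u where u: "u \<in> Arr C" "Dom C u = Dom C p" "Cod C u = Dom C p0" "p0 \<cdot> u = p" "q0 \<cdot> u = q"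
    using pb_ex[OF pb0, of p q] P by auto
  obtain v where v: "v \<in> Arr C" "Dom C v = Dom C p0" "Cod C v = Dom C p" "p \<cdot> v = p0" "q \<cdot> v = q0"
    using pb_ex[OF pb, of p0 q0] P0 by auto
  have vu: "v \<cdot> u = Id C (Dom C p)"
    apply (rule pb_uniq[OF pb])
    using u v P by (simp_all del: assoc add: assoc[symmetric])
  have qa: "q \<cdot> (v \<cdot> a) = q \<cdot> (v \<cdot> b)"
    using K u v P P0 by (simp del: assoc add: assoc[symmetric])
  show ?thesis unfolding regular_epi_def
  proof (intro exI)
    show "is_coequalizer C (v \<cdot> a) (v \<cdot> b) q"
      unfolding is_coequalizer_def
    proof (intro conjI ballI impI)
      fix h assume h: "h \<in> Arr C" "Dom C h = Cod C (v \<cdot> a)" "h \<cdot> (v \<cdot> a) = h \<cdot> (v \<cdot> b)"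
      have hv: "Dom C h = Dom C p" using h K v P0 by simp
      have "(h \<cdot> v) \<cdot> a = (h \<cdot> v) \<cdot> b" using h hv K v P0 by simp
      then obtain w where w: "w \<in> Arr C" "Dom C w = Cod C q0" "Cod C w = Cod C h" "w \<cdot> q0 = h \<cdot> v"
        using coeq_ex[OF co, of "h \<cdot> v"] h hv K v P0 by auto
      have a1: "(w \<cdot> q0) \<cdot> u = w \<cdot> (q0 \<cdot> u)" by (rule assoc) (use w u P0 in auto)
      have a2: "(h \<cdot> v) \<cdot> u = h \<cdot> (v \<cdot> u)" by (rule assoc) (use h hv u v in auto)
      have wq: "w \<cdot> q = h"
        using a1 a2 w(4) u(5) vu h hv by simp
      show "\<exists>!w. w \<in> hom C (Cod C q) (Cod C h) \<and> w \<cdot> q = h"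
      proof (rule ex1I[of _ w])
        show "w \<in> hom C (Cod C q) (Cod C h) \<and> w \<cdot> q = h"
          unfolding hom_def using w(1,2,3) wq P(8) P0(8) by simp
      next
        fix w' assume w': "w' \<in> hom C (Cod C q) (Cod C h) \<and> w' \<cdot> q = h"
        then have W: "w' \<in> Arr C" "Dom C w' = Cod C q" "Cod C w' = Cod C h" "w' \<cdot> q = h"
          unfolding hom_def by auto
        have a3: "(w' \<cdot> q) \<cdot> v = w' \<cdot> (q \<cdot> v)" by (rule assoc) (use W v P in auto)
        have "w' \<cdot> q0 = h \<cdot> v"
          using a3 by (simp only: W(4) v(5))
        then have e1: "w' \<cdot> q0 = w \<cdot> q0" using w(4) by simp
        have d1: "Dom C w' = Cod C q0" using W(2) P(8) P0(8) by simp
        have c1: "Cod C w' = Cod C w" using W(3) w(3) by simp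
        show "w' = w" by (rule regepi_epi[OF r W(1) w(1) d1 w(2) c1 e1])
      qed
    qed (use K u v P P0 qa in auto)
  qed
qed

lemma term_uniq:
  assumes "is_terminal C t" "u \<in> hom C X t" "v \<in> hom C X t"
  shows "u = v"
proof -
  have "X \<in> Obj C" using assms(2) unfolding hom_def by auto
  then show ?thesis using assms unfolding is_terminal_def by blast
qed

lemma prod_exists:
  assumes fc: "finitely_complete C" and x: "x \<in> Obj C" and y: "y \<in> Obj C"
  shows "\<exists>P p1 p2. is_product C x y P p1 p2"
proof -
  obtain t where t: "is_terminal C t" using fc unfolding finitely_complete_def by blast
  obtain ux where ux: "ux \<in> hom C x t" using t x unfolding is_terminal_def by blast
  obtain uy where uy: "uy \<in> hom C y t" using t y unfolding is_terminal_def by blast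
  have U: "ux \<in> Arr C" "Dom C ux = x" "Cod C ux = t" "uy \<in> Arr C" "Dom C uy = y" "Cod C uy = t"
    using ux uy unfolding hom_def by auto
  obtain p q where pb: "is_pullback C ux uy p q"
    using fc U unfolding finitely_complete_def by metis
  note P = pbD[OF pb]
  have "is_product C x y (Dom C p) p q"
    unfolding is_product_def
  proof (intro conjI ballI impI)
    fix a b assume ab: "a \<in> Arr C" "b \<in> Arr C" "Dom C a = Dom C b" "Cod C a = x" "Cod C b = y"
    have "ux \<cdot> a = uy \<cdot> b"
      by (rule term_uniq[OF t, of _ "Dom C a"]) (use ab U in \<open>auto simp: hom_def\<close>)
    then show "\<exists>!u. u \<in> hom C (Dom C a) (Dom C p) \<and> p \<cdot> u = a \<and> q \<cdot> u = b"
      using pb_univ[OF pb, of a b] ab U by simp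
  qed (use P U in \<open>auto simp: hom_def\<close>)
  then show ?thesis by blast
qed

lemma id_mono: "x \<in> Obj C \<Longrightarrow> mono C (Id C x)"
  unfolding mono_def by simp

lemma id_pb:
  assumes g: "g \<in> Arr C"
  shows "is_pullback C (Id C (Cod C g)) g g (Id C (Dom C g))"
  unfolding is_pullback_def
proof (intro conjI ballI impI)
  fix a b assume ab: "a \<in> Arr C" "b \<in> Arr C" "Dom C a = Dom C b"
    "Cod C a = Dom C (Id C (Cod C g))" "Cod C b = Dom C g" "Id C (Cod C g) \<cdot> a = g \<cdot> b"
  have ca: "Cod C a = Cod C g" using ab(4) g by simp
  have "Id C (Cod C g) \<cdot> a = a" using ab(1) ca by simp
  then have agb: "g \<cdot> b = a" using ab(6) by simp
  have ib: "Id C (Dom C g) \<cdot> b = b" using ab(2,5) by simp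
  show "\<exists>!u. u \<in> hom C (Dom C a) (Dom C g) \<and> g \<cdot> u = a \<and> Id C (Dom C g) \<cdot> u = b"
  proof (rule ex1I[of _ b])
    show "b \<in> hom C (Dom C a) (Dom C g) \<and> g \<cdot> b = a \<and> Id C (Dom C g) \<cdot> b = b"
      unfolding hom_def using ab(2,3,5) agb ib by simp
  next
    fix u assume u: "u \<in> hom C (Dom C a) (Dom C g) \<and> g \<cdot> u = a \<and> Id C (Dom C g) \<cdot> u = b"
    then have "u \<in> Arr C" "Cod C u = Dom C g" "Id C (Dom C g) \<cdot> u = b" unfolding hom_def by auto
    then show "u = b" by simp
  qed
qed (use g in \<open>auto simp: hom_def\<close>)

lemma monoD:
  assumes "mono C m" "f \<in> Arr C" "g \<in> Arr C" "Dom C f = Dom C g" "Cod C f = Dom C m"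
    "Cod C g = Dom C m" "m \<cdot> f = m \<cdot> g"
  shows "f = g"
  using assms unfolding mono_def by blast

lemma mono_pb:
  assumes m: "mono C m" and pb: "is_pullback C m g g' m'"
  shows "mono C m'"
proof -
  note P = pbD[OF pb]
  show ?thesis unfolding mono_def
  proof (intro conjI ballI impI)
    fix a b assume ab: "a \<in> Arr C" "b \<in> Arr C" "Dom C a = Dom C b" "Cod C a = Dom C m'"
      "Cod C b = Dom C m'" "m' \<cdot> a = m' \<cdot> b"
    have A1: "(m \<cdot> g') \<cdot> a = m \<cdot> (g' \<cdot> a)" by (rule assoc) (use ab P in auto)
    have A2: "(m \<cdot> g') \<cdot> b = m \<cdot> (g' \<cdot> b)" by (rule assoc) (use ab P in auto)
    have A3: "(g \<cdot> m') \<cdot> a = g \<cdot> (m' \<cdot> a)" by (rule assoc) (use ab P in auto)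
    have A4: "(g \<cdot> m') \<cdot> b = g \<cdot> (m' \<cdot> b)" by (rule assoc) (use ab P in auto)
    have EQ: "m \<cdot> (g' \<cdot> a) = m \<cdot> (g' \<cdot> b)"
      using A1 A2 A3 A4 by (simp only: P(9) ab(6))
    have F: "g' \<cdot> a \<in> Arr C" "g' \<cdot> b \<in> Arr C" "Dom C (g' \<cdot> a) = Dom C (g' \<cdot> b)"
      "Cod C (g' \<cdot> a) = Dom C m" "Cod C (g' \<cdot> b) = Dom C m"
      using ab P by auto
    have "g' \<cdot> a = g' \<cdot> b"
      by (rule monoD[OF m F EQ])
    note prev = this
    show "a = b"
      by (rule pb_uniq[OF pb]) (use prev ab P in auto)
  qed (use P in auto)
qed

lemma prod_pb:
  assumes pa: "is_product C E A P p1 p2" and qb: "is_product C E B Q q1 q2"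
    and f: "f \<in> Arr C" "Dom C f = A" "Cod C f = B"
    and h: "h \<in> hom C P Q" "q1 \<cdot> h = p1" "q2 \<cdot> h = f \<cdot> p2"
  shows "is_pullback C f q2 p2 h"
proof -
  note PA = prodD[OF pa] and QB = prodD[OF qb]
  have H: "h \<in> Arr C" "Dom C h = P" "Cod C h = Q" using h unfolding hom_def by auto
  show ?thesis unfolding is_pullback_def
  proof (intro conjI ballI impI)
    fix a b assume ab: "a \<in> Arr C" "b \<in> Arr C" "Dom C a = Dom C b" "Cod C a = Dom C f"
      "Cod C b = Dom C q2" "f \<cdot> a = q2 \<cdot> b"
    obtain u where u: "u \<in> Arr C" "Dom C u = Dom C a" "Cod C u = P" "p1 \<cdot> u = q1 \<cdot> b" "p2 \<cdot> u = a"
      using prod_ex[OF pa, of "q1 \<cdot> b" a] ab QB f by auto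
    have r1: "q1 \<cdot> (h \<cdot> u) = p1 \<cdot> u"
      using u(1,2,3) H PA QB h by (simp del: assoc add: assoc[symmetric])
    have r2: "q2 \<cdot> (h \<cdot> u) = f \<cdot> (p2 \<cdot> u)"
      using u(1,2,3) H PA QB h f by (simp del: assoc add: assoc[symmetric])
    have hu: "h \<cdot> u = b"
      by (rule prod_uniq[OF qb]) (use u H ab r1 r2 QB in auto)
    show "\<exists>!u. u \<in> hom C (Dom C a) (Dom C p2) \<and> p2 \<cdot> u = a \<and> h \<cdot> u = b"
    proof (rule ex1I[of _ u])
      show "u \<in> hom C (Dom C a) (Dom C p2) \<and> p2 \<cdot> u = a \<and> h \<cdot> u = b"
        using u hu PA unfolding hom_def by auto
    next
      fix u' assume u': "u' \<in> hom C (Dom C a) (Dom C p2) \<and> p2 \<cdot> u' = a \<and> h \<cdot> u' = b"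
      then have U': "u' \<in> Arr C" "Dom C u' = Dom C a" "Cod C u' = P" "p2 \<cdot> u' = a" "h \<cdot> u' = b"
        using PA unfolding hom_def by auto
      have "p1 \<cdot> u' = q1 \<cdot> (h \<cdot> u')"
        using U'(1,2,3) H PA QB h by (simp del: assoc add: assoc[symmetric])
      then have "p1 \<cdot> u' = p1 \<cdot> u" using U' u by simp
      note prev = this
    show "u' = u"
        by (rule prod_uniq[OF pa]) (use prev U' u in auto)
    qed
  qed (use PA QB H f h in \<open>auto simp: hom_def\<close>)
qed

lemma regepi_pb_stable:
  assumes fc: "finitely_complete C"
  and H2: "\<forall>f E P p1 p2 Q q1 q2 h.
        regular_epi C f \<longrightarrow> E \<in> Obj C \<longrightarrow>
        is_product C E (Dom C f) P p1 p2 \<longrightarrow> is_product C E (Cod C f) Q q1 q2 \<longrightarrow>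
        h \<in> hom C P Q \<longrightarrow> Comp C q1 h = p1 \<longrightarrow> Comp C q2 h = Comp C f p2 \<longrightarrow>
        regular_epi C h"
  and H3: "\<forall>e s p q.
        regular_epi C e \<longrightarrow> split_mono C s \<longrightarrow> Cod C s = Cod C e \<longrightarrow>
        is_pullback C e s p q \<longrightarrow> regular_epi C q"
  and fr: "regular_epi C f" and pb: "is_pullback C f g p q"
  shows "regular_epi C q"
proof -
  note P = pbD[OF pb]
  obtain PA p1 p2 where pa: "is_product C (Dom C g) (Dom C f) PA p1 p2"
    using prod_exists[OF fc, of "Dom C g" "Dom C f"] P by auto
  obtain PB q1 q2 where qb: "is_product C (Dom C g) (Cod C f) PB q1 q2"
    using prod_exists[OF fc, of "Dom C g" "Cod C f"] P by auto
  note PA = prodD[OF pa] and QB = prodD[OF qb]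
  obtain h where h: "h \<in> Arr C" "Dom C h = PA" "Cod C h = PB" "q1 \<cdot> h = p1" "q2 \<cdot> h = f \<cdot> p2"
    using prod_ex[OF qb, of p1 "f \<cdot> p2"] PA P by auto
  have hr: "regular_epi C h"
    by (rule H2[rule_format, OF fr _ pa qb _ h(4) h(5)]) (use P h in \<open>auto simp: hom_def\<close>)
  obtain s where s: "s \<in> Arr C" "Dom C s = Dom C g" "Cod C s = PB" "q1 \<cdot> s = Id C (Dom C g)" "q2 \<cdot> s = g"
    using prod_ex[OF qb, of "Id C (Dom C g)" g] P by auto
  have sm: "split_mono C s"
    unfolding split_mono_def using s QB unfolding hom_def by auto
  obtain p' q' where pb': "is_pullback C h s p' q'"
    using fc h s unfolding finitely_complete_def by metis
  note P' = pbD[OF pb']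
  have q'r: "regular_epi C q'"
    by (rule H3[rule_format, OF hr sm _ pb']) (use s h in simp)
  have sq: "f \<cdot> (p2 \<cdot> p') = g \<cdot> q'"
  proof -
    have "f \<cdot> (p2 \<cdot> p') = (f \<cdot> p2) \<cdot> p'" using P P' PA h(1,2,3) by simp
    also have "\<dots> = (q2 \<cdot> h) \<cdot> p'" using h by simp
    also have "\<dots> = q2 \<cdot> (h \<cdot> p')" using P' QB h(1,2,3) by simp
    also have "\<dots> = q2 \<cdot> (s \<cdot> q')" using P'(9) by simp
    also have "\<dots> = (q2 \<cdot> s) \<cdot> q'" using P' QB s(1,2,3) by simp
    finally show ?thesis using s by simp
  qed
  have pb'': "is_pullback C f g (p2 \<cdot> p') q'"
    unfolding is_pullback_def
  proof (intro conjI ballI impI)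
    fix a b assume ab: "a \<in> Arr C" "b \<in> Arr C" "Dom C a = Dom C b" "Cod C a = Dom C f"
      "Cod C b = Dom C g" "f \<cdot> a = g \<cdot> b"
    obtain c where c: "c \<in> Arr C" "Dom C c = Dom C a" "Cod C c = PA" "p1 \<cdot> c = b" "p2 \<cdot> c = a"
      using prod_ex[OF pa, of b a] ab by auto
    have r1: "q1 \<cdot> (h \<cdot> c) = q1 \<cdot> (s \<cdot> b)"
    proof -
      have "q1 \<cdot> (h \<cdot> c) = (q1 \<cdot> h) \<cdot> c"
        by (rule assoc[symmetric]) (simp_all add: c(1,2,3) h(1,2,3) QB)
      also have "\<dots> = b" by (simp only: h(4) c(4))
      also have "\<dots> = Id C (Dom C g) \<cdot> b" using ab(2,5) by simp
      also have "\<dots> = (q1 \<cdot> s) \<cdot> b" by (simp only: s(4))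
      also have "\<dots> = q1 \<cdot> (s \<cdot> b)"
        by (rule assoc) (simp_all add: ab(2,5) s(1,2,3) QB)
      finally show ?thesis .
    qed
    have r2: "q2 \<cdot> (h \<cdot> c) = q2 \<cdot> (s \<cdot> b)"
    proof -
      have "q2 \<cdot> (h \<cdot> c) = (q2 \<cdot> h) \<cdot> c"
        by (rule assoc[symmetric]) (simp_all add: c(1,2,3) h(1,2,3) QB)
      also have "\<dots> = (f \<cdot> p2) \<cdot> c" by (simp only: h(5))
      also have "\<dots> = f \<cdot> (p2 \<cdot> c)"
        by (rule assoc) (simp_all add: c(1,2,3) PA P(1))
      also have "\<dots> = g \<cdot> b" by (simp only: c(5) ab(6))
      also have "\<dots> = (q2 \<cdot> s) \<cdot> b" by (simp only: s(5))
      also have "\<dots> = q2 \<cdot> (s \<cdot> b)"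
        by (rule assoc) (simp_all add: ab(2,5) s(1,2,3) QB)
      finally show ?thesis .
    qed
    have hc: "h \<cdot> c = s \<cdot> b"
      by (rule prod_uniq[OF qb]) (use c(1,2,3) h(1,2,3) s(1,2,3) ab(2,3,5) r1 r2 in auto)
    obtain u where u: "u \<in> Arr C" "Dom C u = Dom C c" "Cod C u = Dom C p'" "p' \<cdot> u = c" "q' \<cdot> u = b"
      using pb_ex[OF pb', of c b] c(1,2,3) h(1,2,3) s(1,2,3) ab(2,3,5) hc by auto
    have pu: "(p2 \<cdot> p') \<cdot> u = a"
    proof -
      have "(p2 \<cdot> p') \<cdot> u = p2 \<cdot> (p' \<cdot> u)"
        by (rule assoc) (simp_all add: u(1,2,3) P'(1-8) PA h(1,2,3))
      also have "\<dots> = a" by (simp only: u(4) c(5))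
      finally show ?thesis .
    qed
    show "\<exists>!u. u \<in> hom C (Dom C a) (Dom C (p2 \<cdot> p')) \<and> (p2 \<cdot> p') \<cdot> u = a \<and> q' \<cdot> u = b"
    proof (rule ex1I[of _ u])
      show "u \<in> hom C (Dom C a) (Dom C (p2 \<cdot> p')) \<and> (p2 \<cdot> p') \<cdot> u = a \<and> q' \<cdot> u = b"
        using u(1,2,3,5) pu c(2) P'(1-8) PA h(1,2,3) unfolding hom_def by auto
    next
      fix u' assume u': "u' \<in> hom C (Dom C a) (Dom C (p2 \<cdot> p')) \<and> (p2 \<cdot> p') \<cdot> u' = a \<and> q' \<cdot> u' = b"
      have U0: "u' \<in> Arr C" "Dom C u' = Dom C a" "Cod C u' = Dom C p'"
        using u' P'(1-8) PA h(1,2,3) unfolding hom_def by auto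
      have "p2 \<cdot> (p' \<cdot> u') = (p2 \<cdot> p') \<cdot> u'"
        by (rule assoc[symmetric]) (simp_all add: U0 P'(1-8) PA h(1,2,3))
      then have U': "u' \<in> Arr C" "Dom C u' = Dom C a" "Cod C u' = Dom C p'" "p2 \<cdot> (p' \<cdot> u') = a" "q' \<cdot> u' = b"
        using U0 u' by auto
      have e1: "p1 \<cdot> (p' \<cdot> u') = b"
      proof -
        have "p1 \<cdot> (p' \<cdot> u') = (q1 \<cdot> h) \<cdot> (p' \<cdot> u')" by (simp only: h(4))
        also have "\<dots> = q1 \<cdot> (h \<cdot> (p' \<cdot> u'))"
          by (rule assoc) (simp_all add: U0 P'(1-8) QB h(1,2,3) s(1,2,3))
        also have "\<dots> = q1 \<cdot> ((h \<cdot> p') \<cdot> u')"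
          using U0 P'(1-8) QB h(1,2,3) by simp
        also have "\<dots> = q1 \<cdot> ((s \<cdot> q') \<cdot> u')" by (simp only: P'(9))
        also have "\<dots> = q1 \<cdot> (s \<cdot> (q' \<cdot> u'))"
          using U0 P'(1-8) s(1,2,3) by simp
        also have "\<dots> = (q1 \<cdot> s) \<cdot> (q' \<cdot> u')"
          by (rule assoc[symmetric]) (simp_all add: U0 P'(1-8) QB s(1,2,3))
        also have "\<dots> = Id C (Dom C g) \<cdot> b" by (simp only: s(4) U'(5))
        also have "\<dots> = b" using ab(2,5) by simp
        finally show ?thesis .
      qed
      have "p' \<cdot> u' = c"
        by (rule prod_uniq[OF pa]) (use U0 P'(1-8) h(1,2,3) c e1 U'(4) in auto)
      note prev = this
      show "u' = u"
        by (rule pb_uniq[OF pb']) (use prev U0 U'(5) u c(2) in auto)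
    qed
  qed (use P P' PA sq h(1,2,3) s(1,2,3) in \<open>auto simp: hom_def\<close>)
  show ?thesis by (rule pb_regepi_transfer[OF pb pb'' q'r])
qed

end

theorem lemma2p1:
  fixes C :: "('o, 'a) category"
  assumes "is_category C" and "finitely_complete C"
  shows "regular_category C \<longleftrightarrow>
    (regepi_mono_factorizations C \<and>
     (\<forall>f E P p1 p2 Q q1 q2 h.
        regular_epi C f \<longrightarrow> E \<in> Obj C \<longrightarrow>
        is_product C E (Dom C f) P p1 p2 \<longrightarrow> is_product C E (Cod C f) Q q1 q2 \<longrightarrow>
        h \<in> hom C P Q \<longrightarrow> Comp C q1 h = p1 \<longrightarrow> Comp C q2 h = Comp C f p2 \<longrightarrow>
        regular_epi C h) \<and>
     (\<forall>e s p q.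
        regular_epi C e \<longrightarrow> split_mono C s \<longrightarrow> Cod C s = Cod C e \<longrightarrow>
        is_pullback C e s p q \<longrightarrow> regular_epi C q))"
  (is "_ \<longleftrightarrow> (?F \<and> ?H2 \<and> ?H3)")
proof -
  interpret cat C by (rule cat.intro) (rule assms(1))
  show ?thesis
  proof
    assume rc: "regular_category C"
    then have F: ?F and FS: "factorizations_pullback_stable C"
      unfolding regular_category_def by auto
    have stab: "regular_epi C q" if e: "regular_epi C e" and pb: "is_pullback C e g p q" for e g p q
    proof -
      note P = pbD[OF pb]
      have m1: "mono C (Id C (Cod C g))" using P(2) by (simp add: id_mono)
      have c1: "Cod C e = Dom C (Id C (Cod C g))" using P(2,3) by simp
      have c2: "Cod C g = Cod C (Id C (Cod C g))" using P(2) by simp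
      have fs: "\<forall>e m g g' m' g'' e'.
        regular_epi C e \<longrightarrow> mono C m \<longrightarrow> Cod C e = Dom C m \<longrightarrow>
        g \<in> Arr C \<longrightarrow> Cod C g = Cod C m \<longrightarrow>
        is_pullback C m g g' m' \<longrightarrow> is_pullback C e g' g'' e' \<longrightarrow>
        regular_epi C e' \<and> mono C m'"
        using FS unfolding factorizations_pullback_stable_def .
      have "regular_epi C q \<and> mono C (Id C (Dom C g))"
        by (rule fs[rule_format, OF e m1 c1 P(2) c2 id_pb[OF P(2)] pb])
      then show ?thesis by (rule conjunct1)
    qed
    have H2: ?H2
    proof (intro allI impI)
      fix f E P p1 p2 Q q1 q2 h
      assume a: "regular_epi C f" "E \<in> Obj C" "is_product C E (Dom C f) P p1 p2"
        "is_product C E (Cod C f) Q q1 q2" "h \<in> hom C P Q" "q1 \<cdot> h = p1" "q2 \<cdot> h = f \<cdot> p2"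
      have "is_pullback C f q2 p2 h"
        by (rule prod_pb[OF a(3) a(4)]) (use a regepi_arr in auto)
      then show "regular_epi C h" using stab a(1) by blast
    qed
    have H3: ?H3 using stab by blast
    show "?F \<and> ?H2 \<and> ?H3" using F H2 H3 by blast
  next
    assume h: "?F \<and> ?H2 \<and> ?H3"
    have FS: "factorizations_pullback_stable C"
      unfolding factorizations_pullback_stable_def
    proof (intro allI impI conjI)
      fix e m g g' m' g'' e'
      assume a: "regular_epi C e" "mono C m" "Cod C e = Dom C m" "g \<in> Arr C" "Cod C g = Cod C m"
        "is_pullback C m g g' m'" "is_pullback C e g' g'' e'"
      show "regular_epi C e'"
        using regepi_pb_stable[OF assms(2) _ _ a(1) a(7)] h by blast
      show "mono C m'" by (rule mono_pb[OF a(2) a(6)])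
    qed
    show "regular_category C"
      unfolding regular_category_def using assms h FS by blast
  qed
qed

end
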